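(* Let $n\ge 2$, $1\le p<\infty$, $q=1/p$. Let $\lambda=(\lambda_{ij})$ be an $n\times n$ matrix with nonnegative entries and all row sums equal to $1$, such that $\mathrm{per}(\lambda^q)>0$. Define the $n\times n$ matrix $\bar\lambda$ by $$\bar\lambda_{ij} = \frac{\lambda_{ij}^q\,\mathrm{per}\left(\lambda^q[i,j]\right)}{\mathrm{per}(\lambda^q)}.$$ Then $\mathrm{per}(\bar\lambda^q) \ge \mathrm{per}(\lambda^q)$.
   Context: For a matrix $M$ with nonnegative entries, $M^q$ denotes the matrix obtained by raising each entry to the $q$-th power (with $0^q=0$). For an $n\times n$ matrix $M$, $M[i,j]$ denotes the $(n-1)\times(n-1)$ matrix obtained by deleting row $i$ and column $j$, and $\lambda^q[i,j]$ denotes $(\lambda[i,j])^q$. $\mathrm{per}$ is the permanent. *)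

theory Defs
  imports "HOL-Combinatorics.Permutations" Complex_Main
begin

text \<open>n x n real matrices represented as functions nat => nat => real, indices in {0..<n}.\<close>

definition per :: "nat \<Rightarrow> (nat \<Rightarrow> nat \<Rightarrow> real) \<Rightarrow> real" where
  "per n A = (\<Sum>\<sigma> \<in> {\<sigma>. \<sigma> permutes {0..<n}}. \<Prod>i<n. A i (\<sigma> i))"

text \<open>Deleting row i and column j: the (n-1)x(n-1) matrix, reindexed to {0..<n-1}.\<close>
definition minor :: "(nat \<Rightarrow> nat \<Rightarrow> real) \<Rightarrow> nat \<Rightarrow> nat \<Rightarrow> (nat \<Rightarrow> nat \<Rightarrow> real)" where
  "minor A i j = (\<lambda>k l. A (if k < i then k else Suc k) (if l < j then l else Suc l))"

text \<open>Entrywise power; note 0 powr q = 0 in Isabelle, matching the convention 0^q = 0.\<close>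
definition epow :: "(nat \<Rightarrow> nat \<Rightarrow> real) \<Rightarrow> real \<Rightarrow> (nat \<Rightarrow> nat \<Rightarrow> real)" where
  "epow A q = (\<lambda>i j. A i j powr q)"

end

theory Submission
  imports Defs
begin

definition insi :: "nat \<Rightarrow> nat \<Rightarrow> nat" where "insi j m = (if m < j then m else Suc m)"
definition deli :: "nat \<Rightarrow> nat \<Rightarrow> nat" where "deli j m = (if m < j then m else m - 1)"

lemma deli_insi[simp]: "deli j (insi j m) = m" by (simp add: insi_def deli_def)
lemma insi_deli[simp]: "m \<noteq> j \<Longrightarrow> insi j (deli j m) = m" by (auto simp add: insi_def deli_def)
lemma insi_neq[simp]: "insi j m \<noteq> j" by (simp add: insi_def)
lemma insi_neq2[simp]: "j \<noteq> insi j m" by (simp add: insi_def)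
lemma insi_lt: "m < k \<Longrightarrow> insi j m < Suc k" by (simp add: insi_def)
lemma deli_lt: "m < Suc k \<Longrightarrow> m \<noteq> j \<Longrightarrow> j < Suc k \<Longrightarrow> deli j m < k" by (auto simp add: deli_def)
lemma insi_inj: "insi j a = insi j b \<longleftrightarrow> a = b" by (auto simp add: insi_def)

lemma inj_permutes:
  assumes "finite S" "p ` S \<subseteq> S" "inj_on p S" "\<And>x. x \<notin> S \<Longrightarrow> p x = x"
  shows "p permutes S"
  by (metis assms bij_betw_def bij_imp_permutes endo_inj_surj)

lemma per_minor:
  fixes A :: "nat \<Rightarrow> nat \<Rightarrow> real"
  assumes "i < n" "j < n"
  shows "A i j * per (n - 1) (minor A i j)
    = (\<Sum>\<sigma> \<in> {\<sigma>. \<sigma> permutes {0..<n} \<and> \<sigma> i = j}. \<Prod>k<n. A k (\<sigma> k))"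
proof -
  obtain m where n: "n = Suc m" using assms by (cases n) auto
  define f where "f = (\<lambda>\<sigma>::nat\<Rightarrow>nat. \<lambda>k. if k < m then deli j (\<sigma> (insi i k)) else k)"
  define g where "g = (\<lambda>\<tau>::nat\<Rightarrow>nat. \<lambda>k. if k = i then j else if k < n then insi j (\<tau> (deli i k)) else k)"
  have "A i j * per (n - 1) (minor A i j) = (\<Sum>\<tau> \<in> {\<tau>. \<tau> permutes {0..<m}}. A i j * (\<Prod>k<m. A (insi i k) (insi j (\<tau> k))))"
    by (simp add: n per_def minor_def insi_def sum_distrib_left)
  also have "\<dots> = (\<Sum>\<sigma> \<in> {\<sigma>. \<sigma> permutes {0..<n} \<and> \<sigma> i = j}. \<Prod>k<n. A k (\<sigma> k))"
  proof (rule sum.reindex_bij_witness[where j = g and i = f])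
    fix \<tau> assume "\<tau> \<in> {\<tau>. \<tau> permutes {0..<m}}"
    hence t: "\<tau> permutes {0..<m}" by simp
    show "f (g \<tau>) = \<tau>"
    proof
      fix k show "f (g \<tau>) k = \<tau> k"
        using permutes_not_in[OF t, of k] insi_lt[of k m i] by (auto simp: f_def g_def n)
    qed
    have gi: "g \<tau> i = j" by (simp add: g_def)
    have "g \<tau> permutes {0..<n}"
    proof (rule inj_permutes)
      show "g \<tau> ` {0..<n} \<subseteq> {0..<n}"
      proof
        fix y assume "y \<in> g \<tau> ` {0..<n}"
        then obtain k where k: "k < n" "y = g \<tau> k" by auto
        show "y \<in> {0..<n}"
        proof (cases "k = i")
          case True thus ?thesis using k assms by (simp add: g_def)
        next
          case False
          have "deli i k < m" using deli_lt[of k m i] k False assms n by simp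
          hence "\<tau> (deli i k) < m" using permutes_in_image[OF t] by simp
          thus ?thesis using k False insi_lt by (simp add: g_def n)
        qed
      qed
      show "inj_on (g \<tau>) {0..<n}"
      proof (rule inj_onI)
        fix x y assume xy: "x \<in> {0..<n}" "y \<in> {0..<n}" "g \<tau> x = g \<tau> y"
        show "x = y"
        proof (cases "x = i \<or> y = i")
          case True thus ?thesis using xy insi_neq[of j] by (auto simp: g_def split: if_splits)
        next
          case False
          hence "\<tau> (deli i x) = \<tau> (deli i y)" using xy by (simp add: g_def insi_inj)
          moreover have "deli i x \<in> {0..<m}" "deli i y \<in> {0..<m}"
            using deli_lt[of x m i] deli_lt[of y m i] xy False assms n by auto
          ultimately have "deli i x = deli i y" using permutes_inj_on[OF t] by (meson inj_on_def)
          thus ?thesis using False by (metis insi_deli)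
        qed
      qed
    qed (use assms in \<open>auto simp: g_def\<close>)
    thus "g \<tau> \<in> {\<sigma>. \<sigma> permutes {0..<n} \<and> \<sigma> i = j}" using gi by simp
    have "(\<Prod>k<n. A k (g \<tau> k)) = A i j * (\<Prod>k\<in>insi i ` {..<m}. A k (g \<tau> k))"
    proof -
      have "{..<n} = insert i (insi i ` {..<m})"
      proof
        show "{..<n} \<subseteq> insert i (insi i ` {..<m})"
        proof
          fix k assume "k \<in> {..<n}"
          thus "k \<in> insert i (insi i ` {..<m})"
            using deli_lt[of k m i] assms n by (cases "k = i") (auto intro!: image_eqI[where x = "deli i k"])
        qed
      qed (use assms n insi_lt in auto)
      moreover have "i \<notin> insi i ` {..<m}" by auto
      ultimately show ?thesis by (simp add: gi)
    qed
    also have "\<dots> = A i j * (\<Prod>k<m. A (insi i k) (insi j (\<tau> k)))"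
      by (subst prod.reindex) (auto simp: inj_on_def insi_inj g_def n insi_lt)
    finally show "(\<Prod>k<n. A k (g \<tau> k)) = A i j * (\<Prod>k<m. A (insi i k) (insi j (\<tau> k)))" .
  next
    fix \<sigma> assume "\<sigma> \<in> {\<sigma>. \<sigma> permutes {0..<n} \<and> \<sigma> i = j}"
    hence s: "\<sigma> permutes {0..<n}" and si: "\<sigma> i = j" by auto
    have sne: "\<sigma> k \<noteq> j" if "k \<noteq> i" for k
      using permutes_inj[OF s] si that by (metis injD)
    show "g (f \<sigma>) = \<sigma>"
    proof
      fix k show "g (f \<sigma>) k = \<sigma> k"
      proof (cases "k = i")
        case True thus ?thesis using si by (simp add: g_def)
      next
        case False
        show ?thesis
        proof (cases "k < n")
          case True
          have "deli i k < m" using deli_lt[of k m i] True False assms n by simp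
          thus ?thesis using True False sne[OF False] by (simp add: g_def f_def)
        next
          case False2: False
          thus ?thesis using permutes_not_in[OF s, of k] False by (simp add: g_def)
        qed
      qed
    qed
    show "f \<sigma> \<in> {\<tau>. \<tau> permutes {0..<m}}"
    proof (simp, rule inj_permutes)
      show "f \<sigma> ` {0..<m} \<subseteq> {0..<m}"
      proof
        fix y assume "y \<in> f \<sigma> ` {0..<m}"
        then obtain k where k: "k < m" "y = f \<sigma> k" by auto
        have "insi i k < n" using k insi_lt n by simp
        hence "\<sigma> (insi i k) < n" using permutes_in_image[OF s] by simp
        thus "y \<in> {0..<m}" using k deli_lt[of "\<sigma> (insi i k)" m j] sne[of "insi i k"] assms n
          by (simp add: f_def)
      qed
      show "inj_on (f \<sigma>) {0..<m}"
      proof (rule inj_onI)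
        fix x y assume xy: "x \<in> {0..<m}" "y \<in> {0..<m}" "f \<sigma> x = f \<sigma> y"
        hence "deli j (\<sigma> (insi i x)) = deli j (\<sigma> (insi i y))" by (simp add: f_def)
        hence "\<sigma> (insi i x) = \<sigma> (insi i y)" using sne by (metis insi_deli insi_neq)
        hence "insi i x = insi i y" using permutes_inj[OF s] by (metis injD)
        thus "x = y" by (simp add: insi_inj)
      qed
    qed (auto simp: f_def)
  qed
  finally show ?thesis .
qed

theorem lemma2p3:
  fixes n :: nat and p q :: real and lam :: "nat \<Rightarrow> nat \<Rightarrow> real"
  assumes "n \<ge> 2" and "1 \<le> p" and "q = 1 / p"
    and "\<And>i j. i < n \<Longrightarrow> j < n \<Longrightarrow> lam i j \<ge> 0"
    and "\<And>i. i < n \<Longrightarrow> (\<Sum>j<n. lam i j) = 1"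
    and "per n (epow lam q) > 0"
  shows "per n (epow (\<lambda>i j. (lam i j) powr q * per (n - 1) (minor (epow lam q) i j)
                              / per n (epow lam q)) q)
         \<ge> per n (epow lam q)"
proof -
  note lam_nn = assms(4) and rows = assms(5)
  have q: "q > 0" using assms(2,3) by simp
  define A where "A = epow lam q"
  define P where "P = per n A"
  define L where "L = (\<lambda>i j. (lam i j) powr q * per (n - 1) (minor A i j) / P)"
  define Pm where "Pm = {\<sigma>. \<sigma> permutes {0..<n}}"
  define a where "a = (\<lambda>\<sigma>::nat\<Rightarrow>nat. \<Prod>k<n. A k (\<sigma> k))"
  have P: "P > 0" using assms(6) by (simp add: P_def A_def)
  have finPm: "finite Pm" unfolding Pm_def by (rule finite_permutations) simp
  have A_nn: "A i j \<ge> 0" for i j by (simp add: A_def epow_def)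
  have a_nn: "a \<sigma> \<ge> 0" for \<sigma> unfolding a_def by (rule prod_nonneg) (simp add: A_nn)
  have Psum: "P = sum a Pm" by (simp add: P_def per_def a_def Pm_def)
  have Lsum: "L i j = (\<Sum>\<sigma> \<in> {\<sigma>. \<sigma> permutes {0..<n} \<and> \<sigma> i = j}. a \<sigma>) / P" if "i < n" "j < n" for i j
    using per_minor[OF that, of A] by (simp add: L_def a_def A_def epow_def)
  have img: "(\<lambda>\<sigma>. \<sigma> k) ` Pm \<subseteq> {..<n}" if "k < n" for k
    using that permutes_in_image by (fastforce simp: Pm_def)
  have grp: "(\<Sum>j<n. (\<Sum>\<sigma> \<in> {\<sigma>. \<sigma> permutes {0..<n} \<and> \<sigma> k = j}. h \<sigma>)) = sum h Pm" if "k < n" for k h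
    using sum.group[OF finPm _ img[OF that], of h] by (simp add: Pm_def)
  have Lrow: "(\<Sum>j<n. L k j) = 1" if "k < n" for k
  proof -
    have "(\<Sum>j<n. L k j) = (\<Sum>j<n. (\<Sum>\<sigma> \<in> {\<sigma>. \<sigma> permutes {0..<n} \<and> \<sigma> k = j}. a \<sigma>)) / P"
      using Lsum that by (simp add: sum_divide_distrib)
    also have "\<dots> = 1" using grp[OF that, of a] Psum P by simp
    finally show ?thesis .
  qed
  define S where "S = {\<sigma>\<in>Pm. a \<sigma> > 0}"
  have finS: "finite S" using finPm by (simp add: S_def)
  have SPm: "S \<subseteq> Pm" by (auto simp: S_def)
  have aS: "sum a S = P"
    unfolding Psum by (rule sum.mono_neutral_left[OF finPm SPm]) (use a_nn in \<open>auto simp: S_def intro: order_antisym\<close>)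
  have Sne: "S \<noteq> {}" using aS P by auto
  have Apos: "A k (\<sigma> k) > 0" if "\<sigma> \<in> S" "k < n" for \<sigma> k
  proof -
    have "a \<sigma> \<noteq> 0" using that by (simp add: S_def)
    hence "A k (\<sigma> k) \<noteq> 0" using that unfolding a_def by (metis finite_lessThan lessThan_iff prod_zero_iff)
    thus ?thesis using A_nn[of k "\<sigma> k"] by simp
  qed
  have lampos: "lam k (\<sigma> k) > 0" if "\<sigma> \<in> S" "k < n" for \<sigma> k
  proof -
    have "\<sigma> k < n" using that permutes_in_image by (fastforce simp: S_def Pm_def)
    moreover have "lam k (\<sigma> k) \<noteq> 0" using Apos[OF that] by (auto simp: A_def epow_def)
    ultimately show ?thesis using lam_nn[of k "\<sigma> k"] that by simp
  qed
  have Lpos: "L k (\<sigma> k) > 0" if "\<sigma> \<in> S" "k < n" for \<sigma> k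
  proof -
    have s: "\<sigma> permutes {0..<n}" using that by (simp add: S_def Pm_def)
    have sk: "\<sigma> k < n" using that permutes_in_image[OF s] by simp
    have "a \<sigma> \<le> (\<Sum>\<tau> \<in> {\<tau>. \<tau> permutes {0..<n} \<and> \<tau> k = \<sigma> k}. a \<tau>)"
      by (rule member_le_sum) (use s a_nn finPm in \<open>auto simp: Pm_def\<close>)
    moreover have "a \<sigma> > 0" using that by (simp add: S_def)
    ultimately show ?thesis using Lsum[OF that(2) sk] P by simp
  qed
  define b where "b = (\<lambda>\<sigma>::nat\<Rightarrow>nat. \<Prod>k<n. L k (\<sigma> k) powr q)"
  define M where "M = sum b S"
  have bpos: "b \<sigma> > 0" if "\<sigma> \<in> S" for \<sigma>
    unfolding b_def by (rule prod_pos) (use Lpos that in force)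
  have M: "M > 0" unfolding M_def using Sne finS bpos by (simp add: sum_pos)
  have apos: "a \<sigma> > 0" if "\<sigma> \<in> S" for \<sigma> using that by (simp add: S_def)
  define d where "d = (\<lambda>k j. q * (ln (L k j) - ln (lam k j)))"
  define D where "D = (\<lambda>\<sigma>::nat\<Rightarrow>nat. \<Sum>k<n. d k (\<sigma> k))"
  have lnb: "ln (b \<sigma>) = (\<Sum>k<n. q * ln (L k (\<sigma> k)))" if "\<sigma> \<in> S" for \<sigma>
  proof -
    have "\<forall>k<n. L k (\<sigma> k) \<noteq> 0" using Lpos[OF that] by (metis less_irrefl)
    thus ?thesis unfolding b_def by (subst ln_prod) auto
  qed
  have lna: "ln (a \<sigma>) = (\<Sum>k<n. q * ln (lam k (\<sigma> k)))" if "\<sigma> \<in> S" for \<sigma>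
  proof -
    have "\<forall>k<n. A k (\<sigma> k) \<noteq> 0" using Apos[OF that] by (metis less_irrefl)
    thus ?thesis unfolding a_def by (subst ln_prod) (auto simp: A_def epow_def)
  qed
  have lnD: "ln (b \<sigma>) - ln (a \<sigma>) = D \<sigma>" if "\<sigma> \<in> S" for \<sigma>
    using lnb[OF that] lna[OF that] by (simp add: D_def d_def sum_subtractf algebra_simps)
  have "(\<Sum>\<sigma>\<in>S. a \<sigma> * ln (b \<sigma> * P / (a \<sigma> * M))) \<le> (\<Sum>\<sigma>\<in>S. a \<sigma> * (b \<sigma> * P / (a \<sigma> * M) - 1))"
  proof (rule sum_mono)
    fix \<sigma> assume s: "\<sigma> \<in> S"
    have "ln (b \<sigma> * P / (a \<sigma> * M)) \<le> b \<sigma> * P / (a \<sigma> * M) - 1"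
      by (rule ln_le_minus_one) (use bpos[OF s] apos[OF s] P M in simp)
    thus "a \<sigma> * ln (b \<sigma> * P / (a \<sigma> * M)) \<le> a \<sigma> * (b \<sigma> * P / (a \<sigma> * M) - 1)"
      using apos[OF s] by simp
  qed
  also have "\<dots> = (\<Sum>\<sigma>\<in>S. b \<sigma> * (P / M) - a \<sigma>)"
  proof (rule sum.cong)
    fix x assume "x \<in> S"
    hence "a x \<noteq> 0" using apos[of x] by simp
    thus "a x * (b x * P / (a x * M) - 1) = b x * (P / M) - a x" using M by (simp add: field_simps)
  qed simp
  also have "\<dots> = 0" using aS M by (simp add: sum_subtractf M_def sum_divide_distrib[symmetric] sum_distrib_right[symmetric])
  finally have I1: "(\<Sum>\<sigma>\<in>S. a \<sigma> * ln (b \<sigma> * P / (a \<sigma> * M))) \<le> 0" .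
  have "(\<Sum>\<sigma>\<in>S. a \<sigma> * ln (b \<sigma> * P / (a \<sigma> * M))) = (\<Sum>\<sigma>\<in>S. a \<sigma> * D \<sigma> + a \<sigma> * (ln P - ln M))"
  proof (rule sum.cong)
    fix \<sigma> assume s: "\<sigma> \<in> S"
    have "ln (b \<sigma> * P / (a \<sigma> * M)) = ln (b \<sigma>) + ln P - (ln (a \<sigma>) + ln M)"
      using bpos[OF s] apos[OF s] P M by (simp add: ln_div ln_mult)
    hence e: "ln (b \<sigma> * P / (a \<sigma> * M)) = D \<sigma> + (ln P - ln M)"
      using lnD[OF s] by linarith
    show "a \<sigma> * ln (b \<sigma> * P / (a \<sigma> * M)) = a \<sigma> * D \<sigma> + a \<sigma> * (ln P - ln M)"
      unfolding e by (simp add: distrib_left)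
  qed simp
  also have "\<dots> = (\<Sum>\<sigma>\<in>S. a \<sigma> * D \<sigma>) + P * (ln P - ln M)"
    by (simp add: sum.distrib sum_distrib_right[symmetric] aS)
  finally have I1': "(\<Sum>\<sigma>\<in>S. a \<sigma> * D \<sigma>) + P * (ln P - ln M) \<le> 0" using I1 by simp
  have "(\<Sum>\<sigma>\<in>S. a \<sigma> * D \<sigma>) = (\<Sum>\<sigma>\<in>Pm. a \<sigma> * D \<sigma>)"
    by (rule sum.mono_neutral_left[OF finPm SPm]) (use a_nn in \<open>auto simp: S_def intro: order_antisym\<close>)
  also have "\<dots> = (\<Sum>k<n. \<Sum>\<sigma>\<in>Pm. a \<sigma> * d k (\<sigma> k))"
    by (simp add: D_def sum_distrib_left sum.swap[of _ Pm])
  also have "\<dots> = (\<Sum>k<n. P * (\<Sum>j<n. L k j * d k j))"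
  proof (rule sum.cong)
    fix k assume k: "k \<in> {..<n}"
    have "(\<Sum>\<sigma>\<in>Pm. a \<sigma> * d k (\<sigma> k)) = (\<Sum>j<n. (\<Sum>\<sigma> \<in> {\<sigma>. \<sigma> permutes {0..<n} \<and> \<sigma> k = j}. a \<sigma> * d k (\<sigma> k)))"
      using k by (intro grp[symmetric, of k "\<lambda>\<sigma>. a \<sigma> * d k (\<sigma> k)"]) simp
    also have "\<dots> = (\<Sum>j<n. (\<Sum>\<sigma> \<in> {\<sigma>. \<sigma> permutes {0..<n} \<and> \<sigma> k = j}. a \<sigma>) * d k j)"
      by (simp add: sum_distrib_right)
    also have "\<dots> = (\<Sum>j<n. P * (L k j * d k j))"
      by (rule sum.cong) (use Lsum k P in auto)
    finally show "(\<Sum>\<sigma>\<in>Pm. a \<sigma> * d k (\<sigma> k)) = P * (\<Sum>j<n. L k j * d k j)"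
      by (simp add: sum_distrib_left)
  qed simp
  finally have Deq: "(\<Sum>\<sigma>\<in>S. a \<sigma> * D \<sigma>) = (\<Sum>k<n. P * (\<Sum>j<n. L k j * d k j))" .
  have gibbs: "(\<Sum>j<n. L k j * d k j) \<ge> 0" if k: "k < n" for k
  proof -
    have "(\<Sum>j<n. q * (L k j - lam k j)) \<le> (\<Sum>j<n. L k j * d k j)"
    proof (rule sum_mono)
      fix j assume j: "j \<in> {..<n}"
      have lnn: "lam k j \<ge> 0" using lam_nn k j by simp
      have Lnn: "L k j \<ge> 0" using Lsum[of k j] k j P a_nn by (simp add: sum_nonneg)
      show "q * (L k j - lam k j) \<le> L k j * d k j"
      proof (cases "L k j = 0")
        case True thus ?thesis using lnn q by (simp add: d_def)
      next
        case False
        hence Lp: "L k j > 0" using Lnn by simp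
        have "lam k j \<noteq> 0" using False by (auto simp: L_def)
        hence lp: "lam k j > 0" using lnn by simp
        have "ln (lam k j / L k j) \<le> lam k j / L k j - 1" by (rule ln_le_minus_one) (use lp Lp in simp)
        hence "L k j * (ln (lam k j) - ln (L k j)) \<le> L k j * (lam k j / L k j - 1)"
          using lp Lp by (simp add: ln_div)
        moreover have "L k j * (lam k j / L k j - 1) = lam k j - L k j" using Lp by (simp add: field_simps)
        ultimately have "L k j * (ln (lam k j) - ln (L k j)) \<le> lam k j - L k j" by linarith
        hence "L k j - lam k j \<le> L k j * (ln (L k j) - ln (lam k j))" by (simp add: algebra_simps)
        from mult_left_mono[OF this, of q] q show ?thesis by (simp add: d_def algebra_simps)
      qed
    qed
    moreover have "(\<Sum>j<n. q * (L k j - lam k j)) = 0"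
      using Lrow[OF k] rows[OF k] by (simp add: sum_distrib_left[symmetric] sum_subtractf)
    ultimately show ?thesis by simp
  qed
  have I2: "(\<Sum>\<sigma>\<in>S. a \<sigma> * D \<sigma>) \<ge> 0" unfolding Deq
    by (rule sum_nonneg) (use gibbs P in simp)
  have "ln P \<le> ln M" using I1' I2 P by (smt (verit) mult_pos_pos)
  hence PM: "P \<le> M" using P M by simp
  have "M \<le> per n (epow L q)"
    unfolding M_def per_def epow_def b_def Pm_def[symmetric]
    by (rule sum_mono2[OF finPm SPm]) (auto intro: prod_nonneg)
  hence "P \<le> per n (epow L q)" using PM by simp
  thus ?thesis by (simp add: P_def L_def A_def)
qed

end
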